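(* Let $\mathcal{T}=\mathcal{X}=\mathcal{Y}=\{0,1\}$ and $P\in\Delta_{\mathcal{T},\mathcal{X},\mathcal{Y}}$ with $P(T=0)>0$, $P(T=1)>0$. Assume that if condition (c) or (d) holds then condition (a) or (b) holds, where: (a) $H_P(X\mid T)=0$; (b) $H_P(Y\mid T)=0$; (c) $H_P(X\mid T=0)=0$ and $H_P(Y\mid T=1)=0$; (d) $H_P(X\mid T=1)=0$ and $H_P(Y\mid T=0)=0$. If $\tilde Q\in\arg\max_{Q\in\Delta_P}H_Q(T\mid X,Y)$ lies in the relative interior of $\Delta_P$, then under $\tilde Q$, $T$ is conditionally independent of $X$ given $Y$, or $T$ is conditionally independent of $Y$ given $X$.
   Context: $\Delta_{\mathcal{T},\mathcal{X},\mathcal{Y}}$ is the set of all joint distributions of $(T,X,Y)$. For $P$, $\Delta_P=\{Q\in\Delta_{\mathcal{T},\mathcal{X},\mathcal{Y}}: Q(X=x,T=t)=P(X=x,T=t),\ Q(Y=y,T=t)=P(Y=y,T=t)\ \forall x,y,t\}$. $H_P(X\mid T=t)$ is the entropy of the conditional distribution of $X$ given $T=t$. Conditions (a)–(d) are exactly the cases in which $\Delta_P$ is a single point. *)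

theory Defs
  imports "HOL-Analysis.Analysis"
begin

text \<open>Joint distributions of (T,X,Y) on {0,1}^3, encoded as vectors indexed by
  bool \<times> bool \<times> bool (False = 0, True = 1), component (t,x,y) = P(T=t,X=x,Y=y).
  Using the finite-dimensional vector type makes rel_interior available.\<close>

type_synonym dist3 = "real ^ (bool \<times> bool \<times> bool)"

definition is_dist :: "dist3 \<Rightarrow> bool" where
  "is_dist Q \<longleftrightarrow> (\<forall>i. Q $ i \<ge> 0) \<and> (\<Sum>i\<in>UNIV. Q $ i) = 1"

definition pT :: "dist3 \<Rightarrow> bool \<Rightarrow> real" where
  "pT Q t = (\<Sum>x\<in>UNIV. \<Sum>y\<in>UNIV. Q $ (t,x,y))"

definition pXT :: "dist3 \<Rightarrow> bool \<Rightarrow> bool \<Rightarrow> real" where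
  "pXT Q x t = (\<Sum>y\<in>UNIV. Q $ (t,x,y))"

definition pYT :: "dist3 \<Rightarrow> bool \<Rightarrow> bool \<Rightarrow> real" where
  "pYT Q y t = (\<Sum>x\<in>UNIV. Q $ (t,x,y))"

definition pXY :: "dist3 \<Rightarrow> bool \<Rightarrow> bool \<Rightarrow> real" where
  "pXY Q x y = (\<Sum>t\<in>UNIV. Q $ (t,x,y))"

definition pX :: "dist3 \<Rightarrow> bool \<Rightarrow> real" where
  "pX Q x = (\<Sum>t\<in>UNIV. \<Sum>y\<in>UNIV. Q $ (t,x,y))"

definition pY :: "dist3 \<Rightarrow> bool \<Rightarrow> real" where
  "pY Q y = (\<Sum>t\<in>UNIV. \<Sum>x\<in>UNIV. Q $ (t,x,y))"

definition DeltaP :: "dist3 \<Rightarrow> dist3 set" where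
  "DeltaP P = {Q. is_dist Q \<and> (\<forall>x t. pXT Q x t = pXT P x t) \<and> (\<forall>y t. pYT Q y t = pYT P y t)}"

definition negxlogx :: "real \<Rightarrow> real" where
  "negxlogx p = (if p \<le> 0 then 0 else - p * log 2 p)"

definition H_X_given_T_eq :: "dist3 \<Rightarrow> bool \<Rightarrow> real" where
  "H_X_given_T_eq P t = (\<Sum>x\<in>UNIV. negxlogx (pXT P x t / pT P t))"

definition H_Y_given_T_eq :: "dist3 \<Rightarrow> bool \<Rightarrow> real" where
  "H_Y_given_T_eq P t = (\<Sum>y\<in>UNIV. negxlogx (pYT P y t / pT P t))"

definition H_X_given_T :: "dist3 \<Rightarrow> real" where
  "H_X_given_T P = (\<Sum>t\<in>UNIV. pT P t * H_X_given_T_eq P t)"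

definition H_Y_given_T :: "dist3 \<Rightarrow> real" where
  "H_Y_given_T P = (\<Sum>t\<in>UNIV. pT P t * H_Y_given_T_eq P t)"

definition H_T_given_XY :: "dist3 \<Rightarrow> real" where
  "H_T_given_XY Q = (\<Sum>x\<in>UNIV. \<Sum>y\<in>UNIV.
      pXY Q x y * (\<Sum>t\<in>UNIV. negxlogx (Q $ (t,x,y) / pXY Q x y)))"

definition T_indep_X_given_Y :: "dist3 \<Rightarrow> bool" where
  "T_indep_X_given_Y Q \<longleftrightarrow> (\<forall>t x y. Q $ (t,x,y) * pY Q y = pYT Q y t * pXY Q x y)"

definition T_indep_Y_given_X :: "dist3 \<Rightarrow> bool" where
  "T_indep_Y_given_X Q \<longleftrightarrow> (\<forall>t x y. Q $ (t,x,y) * pX Q x = pXT Q x t * pXY Q x y)"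

end

theory Submission
  imports Defs
begin

lemma sum_bool_t: "(\<Sum>x\<in>(UNIV::bool set). f x) = f t + f (\<not>t)"
  by (cases t) (simp_all add: UNIV_bool add.commute)

lemma sum_bool: "(\<Sum>x\<in>(UNIV::bool set). f x) = f True + f False"
  by (simp add: UNIV_bool add.commute)

lemma sum_pair: "(\<Sum>p\<in>(UNIV::('a::finite\<times>'b::finite) set). g p) = (\<Sum>x\<in>UNIV. \<Sum>y\<in>UNIV. g (x,y))"
  by (simp add: sum.cartesian_product)

lemma sum_UNIV3: "(\<Sum>i\<in>(UNIV::(bool\<times>bool\<times>bool) set). f i)
   = (\<Sum>t\<in>UNIV. \<Sum>x\<in>UNIV. \<Sum>y\<in>UNIV. f (t,x,y))"
  by (simp add: sum_pair)

definition Dv :: "bool \<Rightarrow> dist3" where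
  "Dv t = (\<chi> i. case i of (t',x,y) \<Rightarrow> if t' = t then (if x = y then 1 else -1) else 0)"

lemma Dv_nth: "Dv t $ (t',x,y) = (if t' = t then (if x = y then 1 else -1) else 0)"
  by (simp add: Dv_def)

lemma pert_nth: "(Q + s *\<^sub>R Dv t) $ (t',x,y) = Q $ (t',x,y) + s * (if t' = t then (if x = y then 1 else -1) else 0)"
  by (simp add: Dv_nth)

lemma pert_marg:
  "pXT (Q + s *\<^sub>R Dv t) = pXT Q" "pYT (Q + s *\<^sub>R Dv t) = pYT Q"
  "(\<Sum>i\<in>UNIV. (Q + s *\<^sub>R Dv t) $ i) = (\<Sum>i\<in>UNIV. Q $ i)"
  by (auto simp: fun_eq_iff pXT_def pYT_def pert_nth sum_bool sum_UNIV3 Dv_nth)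

lemma pert_in:
  assumes "Q \<in> DeltaP P" "\<forall>i. (Q + s *\<^sub>R Dv t) $ i \<ge> 0"
  shows "Q + s *\<^sub>R Dv t \<in> DeltaP P"
  using assms pert_marg[of Q s t] unfolding DeltaP_def is_dist_def by simp

lemma pert_affine:
  assumes "Q \<in> DeltaP P" "Q + c *\<^sub>R Dv t \<in> DeltaP P" "c \<noteq> 0"
  shows "Q + s *\<^sub>R Dv t \<in> affine hull (DeltaP P)"
proof -
  have "(1 - s/c) *\<^sub>R Q + (s/c) *\<^sub>R (Q + c *\<^sub>R Dv t) \<in> affine hull (DeltaP P)"
    by (rule mem_affine) (use assms hull_subset[of "DeltaP P" affine] in auto)
  moreover have "(1 - s/c) *\<^sub>R Q + (s/c) *\<^sub>R (Q + c *\<^sub>R Dv t) = Q + s *\<^sub>R Dv t"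
    using assms(3) by (simp add: algebra_simps)
  ultimately show ?thesis by simp
qed

lemma pert_local:
  assumes "Q \<in> rel_interior (DeltaP P)" "Q + c *\<^sub>R Dv t \<in> DeltaP P" "c \<noteq> 0"
  shows "\<exists>d>0. \<forall>s. \<bar>s\<bar> < d \<longrightarrow> Q + s *\<^sub>R Dv t \<in> DeltaP P"
proof -
  from assms(1) obtain e where e: "e > 0" "ball Q e \<inter> affine hull (DeltaP P) \<subseteq> DeltaP P"
    and Q: "Q \<in> DeltaP P"
    by (auto simp: mem_rel_interior_ball)
  define d where "d = e / (norm (Dv t) + 1)"
  have n: "norm (Dv t) + 1 > 0" by (smt (verit) norm_ge_zero)
  have d: "d > 0" using e n by (simp add: d_def)
  have "Q + s *\<^sub>R Dv t \<in> DeltaP P" if "\<bar>s\<bar> < d" for s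
  proof -
    have "\<bar>s\<bar> * norm (Dv t) \<le> \<bar>s\<bar> * (norm (Dv t) + 1)" by (simp add: mult_left_mono)
    also have "\<dots> < d * (norm (Dv t) + 1)"
      using that n by (intro mult_strict_right_mono) auto
    also have "\<dots> = e" using n by (simp add: d_def)
    finally have "dist Q (Q + s *\<^sub>R Dv t) < e" by (simp add: dist_norm)
    hence "Q + s *\<^sub>R Dv t \<in> ball Q e" by simp
    moreover have "Q + s *\<^sub>R Dv t \<in> affine hull (DeltaP P)"
      using pert_affine[OF Q assms(2,3)] .
    ultimately show ?thesis using e by auto
  qed
  thus ?thesis using d by blast
qed

lemma negx_0[simp]: "negxlogx 0 = 0" by (simp add: negxlogx_def)
lemma negx_1[simp]: "negxlogx 1 = 0" by (simp add: negxlogx_def)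

lemma negx_pos: "0 < p \<Longrightarrow> p < 1 \<Longrightarrow> negxlogx p > 0"
  by (simp add: negxlogx_def mult_pos_neg)

lemma negx_nonneg: "0 \<le> p \<Longrightarrow> p \<le> 1 \<Longrightarrow> negxlogx p \<ge> 0"
  using negx_pos[of p] by (cases "p = 0"; cases "p = 1") auto

lemma negx_scale: "0 < m \<Longrightarrow> 0 \<le> q \<Longrightarrow> m * negxlogx (q/m) = negxlogx q + q * log 2 m"
proof (cases "q = 0")
  case False
  assume m: "0 < m" and q: "0 \<le> q"
  with False have q': "q > 0" by simp
  have "q/m > 0" using m q' by simp
  then have "m * negxlogx (q/m) = - q * log 2 (q/m)" using m by (simp add: negxlogx_def)
  also have "\<dots> = - q * (log 2 q - log 2 m)" using m q' by (simp add: log_divide)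
  finally show ?thesis using q' by (simp add: negxlogx_def algebra_simps)
qed simp

lemma cond_term:
  assumes "0 \<le> q0" "0 \<le> q1"
  shows "(q0+q1) * (negxlogx (q0/(q0+q1)) + negxlogx (q1/(q0+q1)))
       = negxlogx q0 + negxlogx q1 - negxlogx (q0+q1)"
proof (cases "q0 + q1 = 0")
  case True
  then have "q0 = 0" "q1 = 0" using assms by auto
  then show ?thesis by simp
next
  case False
  then have m: "q0 + q1 > 0" using assms by simp
  show ?thesis
    using negx_scale[OF m assms(1)] negx_scale[OF m assms(2)] m
    by (simp add: distrib_left negxlogx_def algebra_simps)
qed

lemma H_decomp_t:
  assumes "\<forall>i. Q $ i \<ge> 0"
  shows "H_T_given_XY Q = (\<Sum>x\<in>UNIV. \<Sum>y\<in>UNIV. negxlogx (Q$(t,x,y)) + negxlogx (Q$(\<not>t,x,y))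
            - negxlogx (Q$(t,x,y) + Q$(\<not>t,x,y)))"
  unfolding H_T_given_XY_def pXY_def
  by (intro sum.cong refl) (simp add: sum_bool_t[of _ t] cond_term assms)

lemma H2_zero:
  assumes "0 \<le> u" "0 \<le> v" "0 < u + v"
  shows "negxlogx (u/(u+v)) + negxlogx (v/(u+v)) = 0 \<longleftrightarrow> u = 0 \<or> v = 0"
proof (cases "u = 0 \<or> v = 0")
  case True
  then show ?thesis using assms by auto
next
  case False
  then have "u > 0" "v > 0" using assms by auto
  then have "negxlogx (u/(u+v)) > 0" "negxlogx (v/(u+v)) > 0"
    by (auto intro!: negx_pos simp: field_simps)
  then show ?thesis using False by simp
qed

lemma H2_nonneg:
  assumes "0 \<le> u" "0 \<le> v"
  shows "negxlogx (u/(u+v)) + negxlogx (v/(u+v)) \<ge> 0"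
proof (cases "u + v = 0")
  case True then show ?thesis by simp
next
  case False then have "u + v > 0" using assms by simp
  then show ?thesis using assms by (intro add_nonneg_nonneg negx_nonneg) (auto simp: field_simps)
qed

definition G :: "real \<Rightarrow> real" where "G u = - (u * ln u) / ln 2"

lemma negx_G: "0 < u \<Longrightarrow> negxlogx u = G u"
  by (simp add: negxlogx_def G_def log_def)

lemma G_deriv:
  assumes "0 < e"
  shows "((\<lambda>s. G (e + \<sigma> * s)) has_real_derivative (- \<sigma> * (ln e + 1) / ln 2)) (at 0)"
  unfolding G_def using assms
  by (auto intro!: derivative_eq_intros simp: field_simps)

lemma stationary:
  assumes RI: "Qt \<in> rel_interior (DeltaP P)" and D: "Qt \<in> DeltaP P"
    and M: "\<forall>Q\<in>DeltaP P. H_T_given_XY Q \<le> H_T_given_XY Qt"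
    and pos: "\<forall>x y. Qt $ (t,x,y) > 0"
  shows "Qt$(t,True,True) * Qt$(t,False,False) * ((Qt$(t,True,False)+Qt$(\<not>t,True,False)) * (Qt$(t,False,True)+Qt$(\<not>t,False,True)))
       = Qt$(t,True,False) * Qt$(t,False,True) * ((Qt$(t,True,True)+Qt$(\<not>t,True,True)) * (Qt$(t,False,False)+Qt$(\<not>t,False,False)))"
proof -
  define e where "e x y = Qt$(t,x,y)" for x y
  define f where "f x y = Qt$(\<not>t,x,y)" for x y
  define \<sigma> where "\<sigma> x y = (if x = y then 1 else -1::real)" for x y :: bool
  have nn: "\<forall>i. Qt $ i \<ge> 0" using D by (simp add: DeltaP_def is_dist_def)
  have epos: "e x y > 0" for x y using pos by (simp add: e_def)
  have fnn: "f x y \<ge> 0" for x y using nn by (simp add: f_def)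
  define c0 where "c0 = min (e True False) (e False True)"
  have c0: "c0 > 0" using epos by (simp add: c0_def)
  have "Qt + c0 *\<^sub>R Dv t \<in> DeltaP P"
  proof (rule pert_in[OF D])
    show "\<forall>i. (Qt + c0 *\<^sub>R Dv t) $ i \<ge> 0"
    proof (simp only: split_paired_All, intro allI)
      fix t' x y
      show "(Qt + c0 *\<^sub>R Dv t) $ (t',x,y) \<ge> 0"
      proof (cases "t' = t")
        case True
        then show ?thesis using epos[of x y] c0 unfolding pert_nth
          by (cases x; cases y) (auto simp: e_def c0_def)
      next
        case False
        then show ?thesis using nn unfolding pert_nth by simp
      qed
    qed
  qed
  then obtain d where d: "d > 0" "\<forall>s. \<bar>s\<bar> < d \<longrightarrow> Qt + s *\<^sub>R Dv t \<in> DeltaP P"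
    using pert_local[OF RI _ ] c0 by (metis less_irrefl)
  define d' where "d' = min d (min (min (e True True) (e True False)) (min (e False True) (e False False)))"
  have d': "d' > 0" using d epos by (simp add: d'_def)
  have small: "\<bar>s\<bar> < e x y" if "\<bar>s\<bar> < d'" for s x y
    using that by (cases x; cases y) (auto simp: d'_def)
  define h where "h s = (\<Sum>x\<in>UNIV. \<Sum>y\<in>UNIV. G (e x y + \<sigma> x y * s) + negxlogx (f x y)
        - G ((e x y + f x y) + \<sigma> x y * s))" for s
  have eq: "H_T_given_XY (Qt + s *\<^sub>R Dv t) = h s" if s: "\<bar>s\<bar> < d'" for s
  proof -
    have inD: "Qt + s *\<^sub>R Dv t \<in> DeltaP P" using d s by (simp add: d'_def)
    then have nn': "\<forall>i. (Qt + s *\<^sub>R Dv t) $ i \<ge> 0" by (simp add: DeltaP_def is_dist_def)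
    show ?thesis unfolding H_decomp_t[OF nn', of t] h_def
    proof (intro sum.cong refl)
      fix x y
      have p1: "e x y + \<sigma> x y * s > 0" using small[OF s, of x y] by (auto simp: \<sigma>_def)
      have p2: "(e x y + f x y) + \<sigma> x y * s > 0" using p1 fnn[of x y] by linarith
      have q1: "(Qt + s *\<^sub>R Dv t) $ (t,x,y) = e x y + \<sigma> x y * s"
        by (simp add: Dv_nth e_def \<sigma>_def)
      have q2: "(Qt + s *\<^sub>R Dv t) $ (\<not>t,x,y) = f x y"
        by (simp add: Dv_nth f_def)
      show "negxlogx ((Qt + s *\<^sub>R Dv t) $ (t, x, y)) + negxlogx ((Qt + s *\<^sub>R Dv t) $ (\<not> t, x, y)) -
          negxlogx ((Qt + s *\<^sub>R Dv t) $ (t, x, y) + (Qt + s *\<^sub>R Dv t) $ (\<not> t, x, y)) =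
          G (e x y + \<sigma> x y * s) + negxlogx (f x y) - G ((e x y + f x y) + \<sigma> x y * s)"
        unfolding q1 q2 using p1 p2 negx_G[OF p1] negx_G[OF p2] by (simp add: algebra_simps)
    qed
  qed
  have lm: "\<forall>y. \<bar>0 - y\<bar> < d' \<longrightarrow> h y \<le> h 0"
  proof (intro allI impI)
    fix y assume "\<bar>0 - y\<bar> < d'"
    then have y: "\<bar>y\<bar> < d'" by simp
    have "h y = H_T_given_XY (Qt + y *\<^sub>R Dv t)" using eq[OF y] by simp
    also have "\<dots> \<le> H_T_given_XY Qt" using M d y by (simp add: d'_def)
    also have "\<dots> = h 0" using eq[of 0] d' by simp
    finally show "h y \<le> h 0" .
  qed
  have term_deriv: "((\<lambda>s. G (e x y + \<sigma> x y * s) + negxlogx (f x y) - G ((e x y + f x y) + \<sigma> x y * s))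
      has_real_derivative (- \<sigma> x y * (ln (e x y) + 1) / ln 2 + 0 - (- \<sigma> x y * (ln (e x y + f x y) + 1) / ln 2))) (at 0)" for x y
    using epos[of x y] fnn[of x y]
    by (intro DERIV_diff DERIV_add G_deriv DERIV_const) auto
  have "(h has_real_derivative (\<Sum>x\<in>UNIV. \<Sum>y\<in>UNIV. - \<sigma> x y * (ln (e x y) + 1) / ln 2 + 0 - (- \<sigma> x y * (ln (e x y + f x y) + 1) / ln 2))) (at 0)"
    unfolding h_def[abs_def] by (intro DERIV_sum term_deriv)
  from DERIV_local_max[OF this d' lm]
  have z: "(\<Sum>x\<in>UNIV. \<Sum>y\<in>UNIV. - \<sigma> x y * (ln (e x y) + 1) / ln 2 + 0 - (- \<sigma> x y * (ln (e x y + f x y) + 1) / ln 2)) = 0" .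
  have "(\<Sum>x\<in>UNIV. \<Sum>y\<in>UNIV. \<sigma> x y * (ln (e x y + f x y) - ln (e x y))) = 0"
  proof -
    have "(\<Sum>x\<in>UNIV. \<Sum>y\<in>UNIV. - \<sigma> x y * (ln (e x y) + 1) / ln 2 + 0 - (- \<sigma> x y * (ln (e x y + f x y) + 1) / ln 2))
       = (\<Sum>x\<in>UNIV. \<Sum>y\<in>UNIV. \<sigma> x y * (ln (e x y + f x y) - ln (e x y))) / ln 2"
      by (simp add: sum_divide_distrib algebra_simps diff_divide_distrib add_divide_distrib)
    with z show ?thesis by simp
  qed
  then have L: "ln (e True True + f True True) - ln (e True True) - (ln (e True False + f True False) - ln (e True False))
     - (ln (e False True + f False True) - ln (e False True)) + (ln (e False False + f False False) - ln (e False False)) = 0"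
    by (simp add: sum_bool \<sigma>_def)
  define a where "a = e True True" define b where "b = e True False"
  define c where "c = e False True" define dd where "dd = e False False"
  define A where "A = e True True + f True True" define B where "B = e True False + f True False"
  define C where "C = e False True + f False True" define DD where "DD = e False False + f False False"
  have ps: "a > 0" "b > 0" "c > 0" "dd > 0" "A > 0" "B > 0" "C > 0" "DD > 0"
    using epos fnn unfolding a_def b_def c_def dd_def A_def B_def C_def DD_def by (auto simp: add_pos_nonneg)
  have L2: "ln A - ln a - (ln B - ln b) - (ln C - ln c) + (ln DD - ln dd) = 0"
    using L unfolding A_def B_def C_def DD_def a_def b_def c_def dd_def .
  have "ln (a * dd * (B * C)) = ln (b * c * (A * DD))"
    using L2 ps by (simp add: ln_mult)
  then have "a * dd * (B * C) = b * c * (A * DD)" using ps by simp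
  then show ?thesis by (simp add: a_def b_def c_def dd_def A_def B_def C_def DD_def e_def f_def)
qed

definition "indX a0 b0 c0 d0 a1 b1 c1 d1 \<longleftrightarrow> (b0*d1 = b1*(d0::real) \<and> a0*c1 = a1*c0)"
definition "indY a0 b0 c0 d0 a1 b1 c1 d1 \<longleftrightarrow> (a0*b1 = a1*(b0::real) \<and> c0*d1 = c1*d0)"

lemma both_pos:
  fixes a0 b0 c0 d0 a1 b1 c1 d1 :: real
  assumes h0: "a0*d0*((b0+b1)*(c0+c1)) = b0*c0*((a0+a1)*(d0+d1))"
  and h1: "a1*d1*((b1+b0)*(c1+c0)) = b1*c1*((a1+a0)*(d1+d0))"
  and p: "a0>0" "b0>0" "c0>0" "d0>0" "a1>0" "b1>0" "c1>0" "d1>0"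
  shows "indX a0 b0 c0 d0 a1 b1 c1 d1 \<or> indY a0 b0 c0 d0 a1 b1 c1 d1"
proof -
  have nz: "d0 \<noteq> 0" "d1 \<noteq> 0" "(b0+b1)*(c0+c1) \<noteq> 0" "a0+a1 \<noteq> 0" using p by auto
  have "(b0*d1 - b1*d0)*(c0*d1 - c1*d0) = 0" using h0 h1 nz by algebra
  then consider "b0*d1 = b1*d0" | "c0*d1 = c1*d0" by auto
  then show ?thesis
  proof cases
    case 1
    have "a0*c1 = a1*c0" using h0 h1 nz 1 by algebra
    then show ?thesis using 1 by (simp add: indX_def)
  next
    case 2
    have nz2: "c0 \<noteq> 0" "c1 \<noteq> 0" using p by auto
    have "a0*b1 = a1*b0" using h0 h1 nz nz2 2 by algebra
    then show ?thesis using 2 by (simp add: indY_def)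
  qed
qed

lemma one_pos:
  fixes a0 b0 c0 d0 a1 b1 c1 d1 :: real
  assumes h0: "a0*d0*((b0+b1)*(c0+c1)) = b0*c0*((a0+a1)*(d0+d1))"
  and p: "a0>0" "b0>0" "c0>0" "d0>0" 
  and z: "(a1=0\<and>b1=0) \<or> (c1=0\<and>d1=0) \<or> (a1=0\<and>c1=0) \<or> (b1=0\<and>d1=0)"
  shows "indX a0 b0 c0 d0 a1 b1 c1 d1 \<or> indY a0 b0 c0 d0 a1 b1 c1 d1"
proof -
  have nz: "a0 \<noteq> 0" "b0 \<noteq> 0" "c0 \<noteq> 0" "d0 \<noteq> 0" using p by auto
  from z consider "a1=0" "b1=0" | "c1=0" "d1=0" | "a1=0" "c1=0" | "b1=0" "d1=0" by blast
  then show ?thesis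
  proof cases
    case 1
    have "c0*d1 = c1*d0" using h0 nz 1 by algebra
    then show ?thesis using 1 by (simp add: indY_def)
  next
    case 2
    have "a0*b1 = a1*b0" using h0 nz 2 by algebra
    then show ?thesis using 2 by (simp add: indY_def)
  next
    case 3
    have "b0*d1 = b1*d0" using h0 nz 3 by algebra
    then show ?thesis using 3 by (simp add: indX_def)
  next
    case 4
    have "a0*c1 = a1*c0" using h0 nz 4 by algebra
    then show ?thesis using 4 by (simp add: indX_def)
  qed
qed

lemma ind_swap: "indX a0 b0 c0 d0 a1 b1 c1 d1 = indX a1 b1 c1 d1 a0 b0 c0 d0"
  "indY a0 b0 c0 d0 a1 b1 c1 d1 = indY a1 b1 c1 d1 a0 b0 c0 d0"
  by (auto simp: indX_def indY_def)

lemma final_alg: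
  fixes a0 b0 c0 d0 a1 b1 c1 d1 :: real
  assumes S0: "(a0>0\<and>b0>0\<and>c0>0\<and>d0>0 \<and> a0*d0*((b0+b1)*(c0+c1)) = b0*c0*((a0+a1)*(d0+d1)))
       \<or> (a0=0\<and>b0=0) \<or> (c0=0\<and>d0=0) \<or> (a0=0\<and>c0=0) \<or> (b0=0\<and>d0=0)"
  and S1: "(a1>0\<and>b1>0\<and>c1>0\<and>d1>0 \<and> a1*d1*((b1+b0)*(c1+c0)) = b1*c1*((a1+a0)*(d1+d0)))
       \<or> (a1=0\<and>b1=0) \<or> (c1=0\<and>d1=0) \<or> (a1=0\<and>c1=0) \<or> (b1=0\<and>d1=0)"
  and H: "((((a0=0\<and>b0=0) \<or> (c0=0\<and>d0=0)) \<and> ((a1=0\<and>c1=0) \<or> (b1=0\<and>d1=0))) \<or>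
           (((a1=0\<and>b1=0) \<or> (c1=0\<and>d1=0)) \<and> ((a0=0\<and>c0=0) \<or> (b0=0\<and>d0=0))))
         \<longrightarrow> ((((a0=0\<and>b0=0) \<or> (c0=0\<and>d0=0)) \<and> ((a1=0\<and>b1=0) \<or> (c1=0\<and>d1=0))) \<or>
              (((a0=0\<and>c0=0) \<or> (b0=0\<and>d0=0)) \<and> ((a1=0\<and>c1=0) \<or> (b1=0\<and>d1=0))))"
  shows "indX a0 b0 c0 d0 a1 b1 c1 d1 \<or> indY a0 b0 c0 d0 a1 b1 c1 d1"
proof -
  have zXX: ?thesis if "((a0=0\<and>b0=0) \<or> (c0=0\<and>d0=0)) \<and> ((a1=0\<and>b1=0) \<or> (c1=0\<and>d1=0))"
    using that by (auto simp: indX_def indY_def)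
  have zYY: ?thesis if "((a0=0\<and>c0=0) \<or> (b0=0\<and>d0=0)) \<and> ((a1=0\<and>c1=0) \<or> (b1=0\<and>d1=0))"
    using that by (auto simp: indX_def indY_def)
  show ?thesis
  proof (cases "a0>0\<and>b0>0\<and>c0>0\<and>d0>0 \<and> a0*d0*((b0+b1)*(c0+c1)) = b0*c0*((a0+a1)*(d0+d1))")
    case T0: True
    show ?thesis
    proof (cases "a1>0\<and>b1>0\<and>c1>0\<and>d1>0 \<and> a1*d1*((b1+b0)*(c1+c0)) = b1*c1*((a1+a0)*(d1+d0))")
      case True
      then show ?thesis using T0 both_pos[of a0 d0 b0 b1 c0 c1 a1 d1] by (simp add: algebra_simps)
    next
      case False
      then show ?thesis using T0 S1 one_pos[of a0 d0 b0 b1 c0 c1 a1 d1] by blast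
    qed
  next
    case F0: False
    show ?thesis
    proof (cases "a1>0\<and>b1>0\<and>c1>0\<and>d1>0 \<and> a1*d1*((b1+b0)*(c1+c0)) = b1*c1*((a1+a0)*(d1+d0))")
      case True
      then show ?thesis using F0 S0 one_pos[of a1 d1 b1 b0 c1 c0 a0 d0] by (auto simp: ind_swap)
    next
      case False
      then show ?thesis using F0 S0 S1 H zXX zYY by blast
    qed
  qed
qed

lemma feas_pos:
  assumes RI: "Qt \<in> rel_interior (DeltaP P)" and F: "Qt + c *\<^sub>R Dv t \<in> DeltaP P" and c: "c \<noteq> 0"
  shows "Qt $ (t,x,y) > 0"
proof -
  obtain d where d: "d > 0" "\<forall>s. \<bar>s\<bar> < d \<longrightarrow> Qt + s *\<^sub>R Dv t \<in> DeltaP P"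
    using pert_local[OF RI F c] by blast
  have "Qt + (d/2) *\<^sub>R Dv t \<in> DeltaP P" "Qt + (-d/2) *\<^sub>R Dv t \<in> DeltaP P"
    by (rule d(2)[rule_format]; use d(1) in simp)+
  then have "(Qt + (d/2) *\<^sub>R Dv t) $ (t,x,y) \<ge> 0" "(Qt + (-d/2) *\<^sub>R Dv t) $ (t,x,y) \<ge> 0"
    by (auto simp: DeltaP_def is_dist_def)
  then show ?thesis using d by (cases "x = y") (auto simp: Dv_nth)
qed

lemma slice_cases:
  assumes RI: "Qt \<in> rel_interior (DeltaP P)" and D: "Qt \<in> DeltaP P"
  shows "(Qt$(t,True,True) > 0 \<and> Qt$(t,True,False) > 0 \<and> Qt$(t,False,True) > 0 \<and> Qt$(t,False,False) > 0)
    \<or> (Qt$(t,True,True) = 0 \<and> Qt$(t,True,False) = 0) \<or> (Qt$(t,False,True) = 0 \<and> Qt$(t,False,False) = 0)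
    \<or> (Qt$(t,True,True) = 0 \<and> Qt$(t,False,True) = 0) \<or> (Qt$(t,True,False) = 0 \<and> Qt$(t,False,False) = 0)"
proof -
  have nn: "\<forall>i. Qt $ i \<ge> 0" using D by (simp add: DeltaP_def is_dist_def)
  have allpos: ?thesis if F: "Qt + c *\<^sub>R Dv t \<in> DeltaP P" and c: "c \<noteq> 0" for c
    using feas_pos[OF RI F c] by blast
  have feas: "Qt + c *\<^sub>R Dv t \<in> DeltaP P"
    if "c \<le> Qt$(t,True,False)" "c \<le> Qt$(t,False,True)" "-c \<le> Qt$(t,True,True)" "-c \<le> Qt$(t,False,False)" for c
  proof (rule pert_in[OF D])
    show "\<forall>i. (Qt + c *\<^sub>R Dv t) $ i \<ge> 0"
    proof (simp only: split_paired_All, intro allI)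
      fix t' x y
      show "(Qt + c *\<^sub>R Dv t) $ (t',x,y) \<ge> 0"
      proof (cases "t' = t")
        case True
        then show ?thesis using that unfolding pert_nth
          by (cases x; cases y) auto
      next
        case False
        then show ?thesis using nn unfolding pert_nth by simp
      qed
    qed
  qed
  show ?thesis
  proof (cases "Qt$(t,True,False) > 0 \<and> Qt$(t,False,True) > 0")
    case True
    define c where "c = min (Qt$(t,True,False)) (Qt$(t,False,True))"
    have "c > 0" using True by (simp add: c_def)
    then have "Qt + c *\<^sub>R Dv t \<in> DeltaP P" using nn
      by (intro feas) (auto simp: c_def intro: order_trans[of _ 0])
    then show ?thesis using allpos \<open>c > 0\<close> by simp
  next
    case F1: False
    show ?thesis
    proof (cases "Qt$(t,True,True) > 0 \<and> Qt$(t,False,False) > 0")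
      case True
      define c where "c = - min (Qt$(t,True,True)) (Qt$(t,False,False))"
      have "c < 0" using True by (simp add: c_def)
      then have "Qt + c *\<^sub>R Dv t \<in> DeltaP P" using nn
        by (intro feas) (auto simp: c_def intro: order_trans[of _ 0])
      then show ?thesis using allpos \<open>c < 0\<close> by simp
    next
      case False
      have "Qt$(t,x,y) \<ge> 0" for x y using nn by simp
      then show ?thesis using F1 False
        by (smt (verit))
    qed
  qed
qed

lemma indX_imp:
  assumes "indX (Qt$(False,True,True)) (Qt$(False,True,False)) (Qt$(False,False,True)) (Qt$(False,False,False))
                (Qt$(True,True,True)) (Qt$(True,True,False)) (Qt$(True,False,True)) (Qt$(True,False,False))"
  shows "T_indep_X_given_Y Qt"
  using assms unfolding T_indep_X_given_Y_def pY_def pYT_def pXY_def indX_def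
  apply (simp add: sum_bool split_paired_All all_bool_eq)
  apply (elim conjE)
  apply (intro conjI)
  apply algebra+
  done

lemma indY_imp:
  assumes "indY (Qt$(False,True,True)) (Qt$(False,True,False)) (Qt$(False,False,True)) (Qt$(False,False,False))
                (Qt$(True,True,True)) (Qt$(True,True,False)) (Qt$(True,False,True)) (Qt$(True,False,False))"
  shows "T_indep_Y_given_X Qt"
  using assms unfolding T_indep_Y_given_X_def pX_def pXT_def pXY_def indY_def
  apply (simp add: sum_bool split_paired_All all_bool_eq)
  apply (elim conjE)
  apply (intro conjI)
  apply algebra+
  done

lemma HX_facts:
  assumes nn: "\<forall>i. Qt $ i \<ge> 0" and m: "\<forall>x t. pXT Qt x t = pXT P x t" and p: "pT P t > 0"
  shows "H_X_given_T_eq P t \<ge> 0"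
    "H_X_given_T_eq P t = 0 \<longleftrightarrow> (Qt$(t,True,True)=0 \<and> Qt$(t,True,False)=0) \<or> (Qt$(t,False,True)=0 \<and> Qt$(t,False,False)=0)"
proof -
  define u where "u = pXT P True t"
  define v where "v = pXT P False t"
  have u: "u = Qt$(t,True,True) + Qt$(t,True,False)" using m unfolding u_def
    by (metis pXT_def sum_bool)
  have v: "v = Qt$(t,False,True) + Qt$(t,False,False)" using m unfolding v_def
    by (metis pXT_def sum_bool)
  have pt: "pT P t = u + v" unfolding u_def v_def pT_def pXT_def by (simp add: sum_bool)
  have H: "H_X_given_T_eq P t = negxlogx (u/(u+v)) + negxlogx (v/(u+v))"
    unfolding H_X_given_T_eq_def pt[symmetric] by (simp add: sum_bool u_def v_def)
  have u0: "u \<ge> 0" "v \<ge> 0" using nn u v by (auto intro: add_nonneg_nonneg)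
  show "H_X_given_T_eq P t \<ge> 0" using H H2_nonneg[OF u0] by simp
  have "u + v > 0" using p pt by simp
  then have "H_X_given_T_eq P t = 0 \<longleftrightarrow> u = 0 \<or> v = 0" using H H2_zero[OF u0] by simp
  also have "\<dots> \<longleftrightarrow> (Qt$(t,True,True)=0 \<and> Qt$(t,True,False)=0) \<or> (Qt$(t,False,True)=0 \<and> Qt$(t,False,False)=0)"
    using u v nn by (smt (verit))
  finally show "H_X_given_T_eq P t = 0 \<longleftrightarrow> (Qt$(t,True,True)=0 \<and> Qt$(t,True,False)=0) \<or> (Qt$(t,False,True)=0 \<and> Qt$(t,False,False)=0)" .
qed

lemma HY_facts:
  assumes nn: "\<forall>i. Qt $ i \<ge> 0" and m: "\<forall>y t. pYT Qt y t = pYT P y t" and p: "pT P t > 0"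
  shows "H_Y_given_T_eq P t \<ge> 0"
    "H_Y_given_T_eq P t = 0 \<longleftrightarrow> (Qt$(t,True,True)=0 \<and> Qt$(t,False,True)=0) \<or> (Qt$(t,True,False)=0 \<and> Qt$(t,False,False)=0)"
proof -
  define u where "u = pYT P True t"
  define v where "v = pYT P False t"
  have u: "u = Qt$(t,True,True) + Qt$(t,False,True)" using m unfolding u_def
    by (metis pYT_def sum_bool)
  have v: "v = Qt$(t,True,False) + Qt$(t,False,False)" using m unfolding v_def
    by (metis pYT_def sum_bool)
  have pt: "pT P t = u + v" unfolding u_def v_def pT_def pYT_def by (simp add: sum_bool)
  have H: "H_Y_given_T_eq P t = negxlogx (u/(u+v)) + negxlogx (v/(u+v))"
    unfolding H_Y_given_T_eq_def pt[symmetric] by (simp add: sum_bool u_def v_def)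
  have u0: "u \<ge> 0" "v \<ge> 0" using nn u v by (auto intro: add_nonneg_nonneg)
  show "H_Y_given_T_eq P t \<ge> 0" using H H2_nonneg[OF u0] by simp
  have "u + v > 0" using p pt by simp
  then have "H_Y_given_T_eq P t = 0 \<longleftrightarrow> u = 0 \<or> v = 0" using H H2_zero[OF u0] by simp
  also have "\<dots> \<longleftrightarrow> (Qt$(t,True,True)=0 \<and> Qt$(t,False,True)=0) \<or> (Qt$(t,True,False)=0 \<and> Qt$(t,False,False)=0)"
    using u v nn by (smt (verit))
  finally show "H_Y_given_T_eq P t = 0 \<longleftrightarrow> (Qt$(t,True,True)=0 \<and> Qt$(t,False,True)=0) \<or> (Qt$(t,True,False)=0 \<and> Qt$(t,False,False)=0)" .
qed

theorem mainTheorem16: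
  fixes P Qt :: dist3
  assumes "is_dist P"
    and "pT P False > 0" and "pT P True > 0"
    and "((H_X_given_T_eq P False = 0 \<and> H_Y_given_T_eq P True = 0) \<or>
          (H_X_given_T_eq P True = 0 \<and> H_Y_given_T_eq P False = 0))
         \<longrightarrow> (H_X_given_T P = 0 \<or> H_Y_given_T P = 0)"
    and "Qt \<in> DeltaP P"
    and "\<forall>Q\<in>DeltaP P. H_T_given_XY Q \<le> H_T_given_XY Qt"
    and "Qt \<in> rel_interior (DeltaP P)"
  shows "T_indep_X_given_Y Qt \<or> T_indep_Y_given_X Qt"
proof -
  note D = assms(5) and M = assms(6) and RI = assms(7)
  have nn: "\<forall>i. Qt $ i \<ge> 0" and mX: "\<forall>x t. pXT Qt x t = pXT P x t" and mY: "\<forall>y t. pYT Qt y t = pYT P y t"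
    using D by (auto simp: DeltaP_def is_dist_def)
  have pT: "pT P t > 0" for t using assms(2,3) by (cases t) auto
  note HX = HX_facts[OF nn mX pT] and HY = HY_facts[OF nn mY pT]
  have HXT: "H_X_given_T P = 0 \<longleftrightarrow> H_X_given_T_eq P False = 0 \<and> H_X_given_T_eq P True = 0"
  proof -
    have "H_X_given_T P = pT P True * H_X_given_T_eq P True + pT P False * H_X_given_T_eq P False"
      by (simp add: H_X_given_T_def sum_bool)
    moreover have "pT P True * H_X_given_T_eq P True \<ge> 0" "pT P False * H_X_given_T_eq P False \<ge> 0"
      using HX(1) pT by (simp_all add: less_imp_le)
    ultimately show ?thesis using pT[of True] pT[of False] by (smt (verit) mult_pos_pos HX(1) mult_eq_0_iff)
  qed
  have HYT: "H_Y_given_T P = 0 \<longleftrightarrow> H_Y_given_T_eq P False = 0 \<and> H_Y_given_T_eq P True = 0"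
  proof -
    have "H_Y_given_T P = pT P True * H_Y_given_T_eq P True + pT P False * H_Y_given_T_eq P False"
      by (simp add: H_Y_given_T_def sum_bool)
    moreover have "pT P True * H_Y_given_T_eq P True \<ge> 0" "pT P False * H_Y_given_T_eq P False \<ge> 0"
      using HY(1) pT by (simp_all add: less_imp_le)
    ultimately show ?thesis using pT[of True] pT[of False] by (smt (verit) mult_pos_pos HY(1) mult_eq_0_iff)
  qed
  have S: "(Qt$(t,True,True) > 0 \<and> Qt$(t,True,False) > 0 \<and> Qt$(t,False,True) > 0 \<and> Qt$(t,False,False) > 0
       \<and> Qt$(t,True,True) * Qt$(t,False,False) * ((Qt$(t,True,False)+Qt$(\<not>t,True,False)) * (Qt$(t,False,True)+Qt$(\<not>t,False,True)))
       = Qt$(t,True,False) * Qt$(t,False,True) * ((Qt$(t,True,True)+Qt$(\<not>t,True,True)) * (Qt$(t,False,False)+Qt$(\<not>t,False,False))))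
    \<or> (Qt$(t,True,True) = 0 \<and> Qt$(t,True,False) = 0) \<or> (Qt$(t,False,True) = 0 \<and> Qt$(t,False,False) = 0)
    \<or> (Qt$(t,True,True) = 0 \<and> Qt$(t,False,True) = 0) \<or> (Qt$(t,True,False) = 0 \<and> Qt$(t,False,False) = 0)" for t
  proof -
    have "\<forall>x y. Qt$(t,x,y) > 0" if "Qt$(t,True,True) > 0 \<and> Qt$(t,True,False) > 0 \<and> Qt$(t,False,True) > 0 \<and> Qt$(t,False,False) > 0"
      using that by (simp add: all_bool_eq)
    then show ?thesis using slice_cases[OF RI D, of t] stationary[OF RI D M, of t] by blast
  qed
  have "indX (Qt$(False,True,True)) (Qt$(False,True,False)) (Qt$(False,False,True)) (Qt$(False,False,False))
                (Qt$(True,True,True)) (Qt$(True,True,False)) (Qt$(True,False,True)) (Qt$(True,False,False))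
       \<or> indY (Qt$(False,True,True)) (Qt$(False,True,False)) (Qt$(False,False,True)) (Qt$(False,False,False))
                (Qt$(True,True,True)) (Qt$(True,True,False)) (Qt$(True,False,True)) (Qt$(True,False,False))"
    apply (rule final_alg)
    using S[of False] apply simp
    using S[of True] apply simp
    using assms(4) unfolding HXT HYT HX(2) HY(2) apply blast
    done
  then show ?thesis using indX_imp indY_imp by blast
qed

end
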